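(* Let $M$ be a monoid, let $\sigma : X^+ \to M$ be a semigroup choice of generators for $M$, and let $\tau : X^* \to M$ be the unique extension of $\sigma$ to a monoid choice of generators. Then $$L_\sigma(M) = L_\tau(M) \cap \big(X \hat{X}^* \overline{X} \cup \{\epsilon\}\big),$$ and there exists a word $w \in X^+$ such that $$L_\tau(M) = \{u \in \hat{X}^* : w u \overline{w} \in L_\sigma(M)\}.$$
   Context: Maps are written on the right. $X^*$, $X^+$: free monoid (with empty word $\epsilon$) and free semigroup on $X$. Let $\overline{X} = \{\overline{x} : x \in X\}$ be new symbols, $\hat{X} = X \cup \overline{X}$, and extend $x \mapsto \overline{x}$ to an involution of $\hat{X}^*$ by $\overline{\overline{x}} = x$ and $\overline{x_1 \cdots x_n} = \overline{x_n}\cdots\overline{x_1}$. For a monoid $M$ and surjective monoid morphism $\tau : X^* \to M$, the loop automaton has vertex set $M$, for each $a \in M$, $x \in X$ an edge $a \to a(x\tau)$ labelled $x$ and an edge $a(x\tau) \to a$ labelled $\overline{x}$; the loop problem $L_\tau(M) \subseteq \hat{X}^*$ is the set of labels of paths from the identity to the identity. For a semigroup $S$ (here $S = M$ regarded as a semigroup) and surjective morphism $\sigma : X^+ \to S$, $L_\sigma(S)$ is the loop problem of $S^1$ ($S$ with a new identity adjoined, even though $M$ already has one) with respect to the unique extension $\sigma^1 : X^* \to S^1$. *)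

theory Defs
  imports Main
begin

text \<open>Letters of \<open>X\<^sup>^ = X \<union> X-bar\<close>: \<open>Pos x\<close> is x, \<open>Neg x\<close> is x-bar.\<close>
datatype 'x letter = Pos 'x | Neg 'x

fun bar_letter :: "'x letter \<Rightarrow> 'x letter" where
  "bar_letter (Pos x) = Neg x"
| "bar_letter (Neg x) = Pos x"

definition bar_word :: "'x letter list \<Rightarrow> 'x letter list" where
  "bar_word u = rev (map bar_letter u)"

definition eval_word :: "('m \<Rightarrow> 'm \<Rightarrow> 'm) \<Rightarrow> 'm \<Rightarrow> ('x \<Rightarrow> 'm) \<Rightarrow> 'x list \<Rightarrow> 'm" where
  "eval_word mult e g w = foldl (\<lambda>a x. mult a (g x)) e w"

text \<open>Paths in the loop automaton: edges a --x--> a(x tau) and a(x tau) --x-bar--> a.\<close>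
inductive path :: "('m \<Rightarrow> 'm \<Rightarrow> 'm) \<Rightarrow> ('x \<Rightarrow> 'm) \<Rightarrow> 'm \<Rightarrow> 'x letter list \<Rightarrow> 'm \<Rightarrow> bool"
  for mult g where
  path_nil: "path mult g a [] a"
| path_pos: "path mult g (mult a (g x)) u b \<Longrightarrow> path mult g a (Pos x # u) b"
| path_neg: "mult a (g x) = c \<Longrightarrow> path mult g a u b \<Longrightarrow> path mult g c (Neg x # u) b"

definition loop_lang :: "('m \<Rightarrow> 'm \<Rightarrow> 'm) \<Rightarrow> 'm \<Rightarrow> ('x \<Rightarrow> 'm) \<Rightarrow> 'x letter list set" where
  "loop_lang mult e g = {u. path mult g e u e}"

definition monoid_loop_lang :: "('x \<Rightarrow> 'm::monoid_mult) \<Rightarrow> 'x letter list set" where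
  "monoid_loop_lang g = loop_lang (*) 1 g"

text \<open>S^1: the semigroup with a new identity adjoined (None), even if it already has one.\<close>
fun adj_mult :: "'m::semigroup_mult option \<Rightarrow> 'm option \<Rightarrow> 'm option" where
  "adj_mult None y = y"
| "adj_mult (Some a) None = Some a"
| "adj_mult (Some a) (Some b) = Some (a * b)"

text \<open>Loop problem L_sigma(S) of a semigroup: loop problem of S^1 w.r.t. sigma^1.\<close>
definition semigroup_loop_lang :: "('x \<Rightarrow> 'm::semigroup_mult) \<Rightarrow> 'x letter list set" where
  "semigroup_loop_lang g = loop_lang adj_mult None (Some \<circ> g)"

definition semigroup_generates :: "('x \<Rightarrow> 'm::monoid_mult) \<Rightarrow> bool" where
  "semigroup_generates g \<longleftrightarrow> (\<forall>m. \<exists>w. w \<noteq> [] \<and> eval_word (*) 1 g w = m)"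

end

theory Submission
  imports Defs
begin

lemma path_append:
  "path m g a (u @ v) b \<longleftrightarrow> (\<exists>c. path m g a u c \<and> path m g c v b)"
proof (induction u arbitrary: a)
  case Nil
  then show ?case by (auto intro: path.intros elim: path.cases)
next
  case (Cons l u)
  show ?case
  proof (cases l)
    case (Pos x)
    have "path m g a (Pos x # w) b \<longleftrightarrow> path m g (m a (g x)) w b" for w b
      by (auto intro: path.intros elim: path.cases)
    then show ?thesis using Cons Pos by simp
  next
    case (Neg x)
    have "path m g a (Neg x # w) b \<longleftrightarrow> (\<exists>a'. m a' (g x) = a \<and> path m g a' w b)" for w b
      by (auto intro: path.intros elim: path.cases)
    then show ?thesis using Cons Neg by auto
  qed
qed

lemma path_pos_word:
  "path m g a (map Pos w) b \<longleftrightarrow> b = foldl (\<lambda>a x. m a (g x)) a w"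
proof (induction w arbitrary: a)
  case Nil
  then show ?case by (auto intro: path.intros elim: path.cases)
next
  case (Cons x w)
  have "path m g a (Pos x # u) b \<longleftrightarrow> path m g (m a (g x)) u b" for u b
    by (auto intro: path.intros elim: path.cases)
  then show ?case using Cons by simp
qed

lemma path_neg_word:
  "path m g c (bar_word (map Pos w)) a \<longleftrightarrow> c = foldl (\<lambda>a x. m a (g x)) a w"
proof (induction w arbitrary: c rule: rev_induct)
  case Nil
  then show ?case by (auto simp: bar_word_def intro: path.intros elim: path.cases)
next
  case (snoc x w)
  have bw: "bar_word (map Pos (w @ [x])) = Neg x # bar_word (map Pos w)"
    by (simp add: bar_word_def)
  have "path m g c (Neg x # u) a \<longleftrightarrow> (\<exists>a'. m a' (g x) = c \<and> path m g a' u a)" for u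
    by (auto intro: path.intros elim: path.cases)
  then show ?case using snoc bw by auto
qed

definition unopt :: "'m::monoid_mult option \<Rightarrow> 'm" where
  "unopt a = (case a of None \<Rightarrow> 1 | Some x \<Rightarrow> x)"

lemma unopt_adj: "unopt (adj_mult a (Some y)) = unopt a * y"
  by (cases a) (auto simp: unopt_def)

lemma path_down:
  "path adj_mult (Some \<circ> g) a u b \<Longrightarrow> path (*) g (unopt a) u (unopt b)"
proof (induction rule: path.induct)
  case (path_nil a)
  then show ?case by (rule path.path_nil)
next
  case (path_pos a x u b)
  then show ?case using unopt_adj[of a "g x"] by (auto intro: path.path_pos)
next
  case (path_neg a x c u b)
  then show ?case using unopt_adj[of a "g x"] by (auto intro: path.path_neg)
qed

lemma path_up:
  "path (*) g a u b \<Longrightarrow> path adj_mult (Some \<circ> g) (Some a) u (Some b)"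
proof (induction rule: path.induct)
  case (path_nil a)
  then show ?case by (rule path.path_nil)
next
  case (path_pos a x u b)
  then show ?case by (auto intro: path.path_pos)
next
  case (path_neg a x c u b)
  then show ?case by (auto intro!: path.path_neg)
qed

lemma adj_not_None: "adj_mult a (Some y) \<noteq> None"
  by (cases a) auto

lemma no_None_Neg: "\<not> path adj_mult (Some \<circ> g) None (Neg x # u) b"
proof
  assume "path adj_mult (Some \<circ> g) None (Neg x # u) b"
  then show False
    by (cases rule: path.cases) (simp_all add: adj_not_None)
qed

lemma single_Neg: "path m g c [Neg y] a \<Longrightarrow> m a (g y) = c"
  by (auto elim: path.cases)

lemma part1:
  fixes g :: "'x \<Rightarrow> 'm::monoid_mult"
  shows "semigroup_loop_lang g =
           monoid_loop_lang g \<inter>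
             ({u. \<exists>x y v. u = Pos x # v @ [Neg y]} \<union> {[]})"
proof (intro equalityI subsetI)
  fix u assume u: "u \<in> semigroup_loop_lang g"
  hence p: "path adj_mult (Some \<circ> g) None u None"
    by (simp add: semigroup_loop_lang_def loop_lang_def)
  have "u \<in> monoid_loop_lang g"
    using path_down[OF p] by (simp add: unopt_def monoid_loop_lang_def loop_lang_def)
  moreover have "u \<in> {u. \<exists>x y v. u = Pos x # v @ [Neg y]} \<union> {[]}"
  proof (cases u rule: rev_cases)
    case Nil then show ?thesis by simp
  next
    case (snoc v l)
    then obtain c where c1: "path adj_mult (Some \<circ> g) None v c"
      and c2: "path adj_mult (Some \<circ> g) c [l] None"
      using p path_append by metis
    obtain y where ly: "l = Neg y"
    proof (cases l)
      case (Pos x)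
      with c2 have "path adj_mult (Some \<circ> g) (adj_mult c (Some (g x))) [] None"
        by (auto elim: path.cases)
      hence "adj_mult c (Some (g x)) = None" by (auto elim: path.cases)
      with adj_not_None show ?thesis by blast
    next
      case (Neg y) then show ?thesis using that by blast
    qed
    show ?thesis
    proof (cases v)
      case Nil
      with c1 have "c = None" by (auto elim: path.cases)
      with c2 ly have "adj_mult None (Some (g y)) = None" using single_Neg by fastforce
      hence False by simp
      then show ?thesis ..
    next
      case (Cons l' v')
      obtain x where "l' = Pos x"
      proof (cases l')
        case (Pos x) then show ?thesis using that by blast
      next
        case (Neg x)
        with c1 Cons have False using no_None_Neg by metis
        then show ?thesis ..
      qed
      then show ?thesis using snoc Cons ly by auto
    qed
  qed
  ultimately show "u \<in> monoid_loop_lang g \<inter> ({u. \<exists>x y v. u = Pos x # v @ [Neg y]} \<union> {[]})"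
    by blast
next
  fix u assume u: "u \<in> monoid_loop_lang g \<inter> ({u. \<exists>x y v. u = Pos x # v @ [Neg y]} \<union> {[]})"
  hence p: "path (*) g 1 u 1" by (simp add: monoid_loop_lang_def loop_lang_def)
  show "u \<in> semigroup_loop_lang g"
  proof (cases "u = []")
    case True then show ?thesis
      by (simp add: semigroup_loop_lang_def loop_lang_def path.path_nil)
  next
    case False
    with u obtain x y v where uu: "u = Pos x # v @ [Neg y]" by blast
    from p uu have "path (*) g (1 * g x) (v @ [Neg y]) 1"
      by (auto elim: path.cases)
    then obtain c where c1: "path (*) g (g x) v c" and c2: "path (*) g c [Neg y] 1"
      using path_append by fastforce
    from single_Neg[OF c2] have cy: "c = g y" by simp
    have "path adj_mult (Some \<circ> g) (Some (g x)) v (Some (g y))"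
      using path_up[OF c1] cy by simp
    moreover have "path adj_mult (Some \<circ> g) (Some (g y)) [Neg y] None"
      by (rule path.path_neg) (auto intro: path.path_nil)
    ultimately have "path adj_mult (Some \<circ> g) (Some (g x)) (v @ [Neg y]) None"
      using path_append by fast
    hence "path adj_mult (Some \<circ> g) None (Pos x # v @ [Neg y]) None"
      by (auto intro: path.path_pos)
    then show ?thesis using uu by (simp add: semigroup_loop_lang_def loop_lang_def)
  qed
qed

theorem proposition4p7:
  fixes g :: "'x \<Rightarrow> 'm::monoid_mult"
  assumes "semigroup_generates g"
  shows "semigroup_loop_lang g =
           monoid_loop_lang g \<inter>
             ({u. \<exists>x y v. u = Pos x # v @ [Neg y]} \<union> {[]})
         \<and> (\<exists>w::'x list. w \<noteq> [] \<and>
           monoid_loop_lang g =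
             {u. map Pos w @ u @ bar_word (map Pos w) \<in> semigroup_loop_lang g})"
proof
  show P1: "semigroup_loop_lang g =
           monoid_loop_lang g \<inter>
             ({u. \<exists>x y v. u = Pos x # v @ [Neg y]} \<union> {[]})" (is "_ = ?R") by (rule part1)
  obtain w where wne: "w \<noteq> []" and w1: "eval_word (*) 1 g w = 1"
    using assms unfolding semigroup_generates_def by blast
  have fw: "foldl (\<lambda>a x. a * g x) 1 w = 1" using w1 by (simp add: eval_word_def)
  have "monoid_loop_lang g = {u. map Pos w @ u @ bar_word (map Pos w) \<in> semigroup_loop_lang g}"
  proof (intro equalityI subsetI CollectI)
    fix u assume "u \<in> monoid_loop_lang g"
    hence p: "path (*) g 1 u 1" by (simp add: monoid_loop_lang_def loop_lang_def)
    have "path (*) g 1 (map Pos w) 1" using fw path_pos_word by metis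
    moreover have "path (*) g 1 (bar_word (map Pos w)) 1" using fw path_neg_word by metis
    ultimately have L: "map Pos w @ u @ bar_word (map Pos w) \<in> monoid_loop_lang g"
      using p path_append by (metis monoid_loop_lang_def loop_lang_def mem_Collect_eq)
    obtain x w' where w': "w = x # w'" using wne by (cases w) auto
    have "bar_word (map Pos w) = bar_word (map Pos w') @ [Neg x]"
      using w' by (simp add: bar_word_def)
    hence "map Pos w @ u @ bar_word (map Pos w) = Pos x # (map Pos w' @ u @ bar_word (map Pos w')) @ [Neg x]"
      using w' by simp
    hence "map Pos w @ u @ bar_word (map Pos w) \<in> ?R" using L by blast
    then show "map Pos w @ u @ bar_word (map Pos w) \<in> semigroup_loop_lang g" using P1 by simp
  next
    fix u assume "u \<in> {u. map Pos w @ u @ bar_word (map Pos w) \<in> semigroup_loop_lang g}"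
    hence "map Pos w @ u @ bar_word (map Pos w) \<in> monoid_loop_lang g" using P1 by simp
    hence "path (*) g 1 (map Pos w @ u @ bar_word (map Pos w)) 1"
      by (simp add: monoid_loop_lang_def loop_lang_def)
    then obtain a b where pa: "path (*) g 1 (map Pos w) a" and pb: "path (*) g a u b"
      and pc: "path (*) g b (bar_word (map Pos w)) 1"
      using path_append by metis
    have "a = 1" using pa fw path_pos_word by metis
    moreover have "b = 1" using pc fw path_neg_word by metis
    ultimately show "u \<in> monoid_loop_lang g" using pb
      by (simp add: monoid_loop_lang_def loop_lang_def)
  qed
  then show "\<exists>w::'x list. w \<noteq> [] \<and> monoid_loop_lang g =
             {u. map Pos w @ u @ bar_word (map Pos w) \<in> semigroup_loop_lang g}"
    using wne by blast
qed

end
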